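(* Let $u\in\mathbb R$, $\vartheta_1\in[0,\pi/2]$, $\varphi_1\in\mathbb R$, and put $x=\cos\vartheta_1\cosh(u+i\varphi_1)$. If $\lambda\in\mathbb C$ satisfies $\cosh\sqrt{\lambda+u^2}-x=0$, then $\operatorname{Re}\lambda\le0$.
   Context: $\cosh\sqrt{\zeta}$ denotes the entire function $\sum_{m\ge0}\zeta^m/(2m)!$ of $\zeta\in\mathbb C$ (independent of the choice of square root). *)

theory Defs
  imports "HOL-Analysis.Analysis"
begin

text \<open>cosh sqrt z as the entire function sum_{m>=0} z^m/(2m)!.\<close>
definition cosh_sqrt :: "complex \<Rightarrow> complex" where
  "cosh_sqrt z = (\<Sum>m. z ^ m / of_nat (fact (2 * m)))"

end

theory Submission
  imports Defs
begin

lemma cosh_real_eq: "cosh (x::real) = (exp x + exp (-x)) / 2"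
  by (simp add: cosh_def)
lemma sinh_real_eq: "sinh (x::real) = (exp x - exp (-x)) / 2"
  by (simp add: sinh_def)

lemma Re_cosh_c: "Re (cosh (z::complex)) = cosh (Re z) * cos (Im z)"
  by (simp add: cosh_conv_cos Re_cos cosh_real_eq)

lemma Im_cosh_c: "Im (cosh (z::complex)) = sinh (Re z) * sin (Im z)"
  by (simp add: cosh_conv_cos Im_cos sinh_real_eq field_simps)

lemma cosh_sqrt_eq: "cosh_sqrt (w^2) = cosh w"
proof -
  have "(\<lambda>n. if even n then w ^ n /\<^sub>R fact n else 0) sums cosh w" by (rule cosh_converges)
  also have "?this \<longleftrightarrow> (\<lambda>n. (if even (2*n) then w ^ (2*n) /\<^sub>R fact (2*n) else 0)) sums cosh w"
    by (subst sums_mono_reindex[of "\<lambda>n. 2*n", symmetric])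
       (auto simp: strict_mono_def elim!: evenE)
  finally have "(\<lambda>n. (w^2) ^ n / of_nat (fact (2*n))) sums cosh w"
    by (simp add: power_mult[symmetric] scaleR_conv_of_real field_simps mult.commute)
  then show ?thesis unfolding cosh_sqrt_def by (simp add: sums_iff)
qed

lemma key:
  fixes a b u ph c :: real
  assumes c: "0 \<le> c" "c \<le> 1"
    and X: "cosh a * cos b = c * cosh u * cos ph"
    and Y: "sinh a * sin b = c * sinh u * sin ph"
  shows "a^2 \<le> u^2"
proof (rule ccontr)
  assume "\<not> a^2 \<le> u^2"
  hence "\<bar>u\<bar> < \<bar>a\<bar>" by (metis abs_le_square_iff not_le)
  hence "cosh \<bar>u\<bar> < cosh \<bar>a\<bar>" by (subst cosh_real_nonneg_less_iff) auto
  hence cl: "cosh u < cosh a" by (simp only: cosh_real_abs)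
  define A where "A = (cosh a)^2"
  define U where "U = (cosh u)^2"
  have U1: "U \<ge> 1" unfolding U_def by (simp add: cosh_square_eq)
  have AU: "U < A" unfolding A_def U_def using cl
    by (smt (verit) cosh_real_pos power_strict_mono zero_less_numeral)
  have sa: "(sinh a)^2 = A - 1" "(sinh u)^2 = U - 1" unfolding A_def U_def by (simp_all add: sinh_square_eq)
  have cb: "(cos b)^2 + (sin b)^2 = 1" "(cos ph)^2 + (sin ph)^2 = 1" by simp_all
  have cp1: "(cos ph)^2 \<le> 1" using cb(2) by (smt (verit) zero_le_power2)
  have c2: "c^2 \<le> 1" using c by (simp add: power_le_one)
  have X2: "A * (cos b)^2 = c^2 * U * (cos ph)^2" unfolding A_def U_def using X
    by (metis power_mult_distrib)
  have Y2: "(A - 1) * (sin b)^2 = c^2 * (U - 1) * (sin ph)^2" using Y sa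
    by (metis power_mult_distrib)
  have "A * (cos b)^2 \<le> U"
  proof -
    have "c^2 * U * (cos ph)^2 \<le> 1 * U * 1"
      using c2 U1 cp1 by (intro mult_mono) auto
    thus ?thesis using X2 by simp
  qed
  hence cbU: "(cos b)^2 < U"
  proof -
    assume h: "A * (cos b)^2 \<le> U"
    show ?thesis
    proof (rule ccontr)
      assume "\<not> (cos b)^2 < U"
      hence "U \<le> (cos b)^2" by simp
      hence "A * U \<le> A * (cos b)^2" using AU U1 by (intro mult_left_mono) auto
      moreover have "A \<le> A * U" using AU U1 by simp
      ultimately show False using h AU by simp
    qed
  qed
  have lhs: "A * (cos b)^2 * (U - 1) + (A - 1) * (sin b)^2 * U \<le> U * (U - 1)"
  proof -
    have "A * (cos b)^2 * (U - 1) + (A - 1) * (sin b)^2 * U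
        = c^2 * (U * (U - 1) * ((cos ph)^2 + (sin ph)^2))"
    proof -
      have e1: "A * (cos b)^2 * (U - 1) + (A - 1) * (sin b)^2 * U
          = (c^2 * U * (cos ph)^2) * (U - 1) + (c^2 * (U - 1) * (sin ph)^2) * U"
        by (simp only: X2 Y2)
      have e2: "(c^2 * U * (cos ph)^2) * (U - 1) + (c^2 * (U - 1) * (sin ph)^2) * U
          = c^2 * (U * (U - 1) * ((cos ph)^2 + (sin ph)^2))"
        by (simp only: algebra_simps)
      show ?thesis using e1 e2 by (rule trans)
    qed
    also have "\<dots> = c^2 * (U * (U - 1))" by simp
    also have "\<dots> \<le> 1 * (U * (U - 1))" using c2 U1 by (intro mult_right_mono) auto
    finally show ?thesis by simp
  qed
  have "A * (cos b)^2 * (U - 1) + (A - 1) * (sin b)^2 * U - U * (U - 1)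
      = (A - U) * (U - (cos b)^2)"
  proof -
    have S: "(sin b)^2 = 1 - (cos b)^2" by (rule sin_squared_eq)
    show ?thesis unfolding S by (simp add: algebra_simps)
  qed
  moreover have "(A - U) * (U - (cos b)^2) > 0" using AU cbU by simp
  ultimately show False using lhs by simp
qed

theorem lemma4p44:
  fixes u th1 ph1 :: real and lam :: complex
  assumes "0 \<le> th1" and "th1 \<le> pi / 2"
    and "cosh_sqrt (lam + complex_of_real (u\<^sup>2)) - complex_of_real (cos th1) * cosh (complex_of_real u + \<i> * complex_of_real ph1) = 0"
  shows "Re lam \<le> 0"
proof -
  define w where "w = csqrt (lam + complex_of_real (u\<^sup>2))"
  have w2: "w^2 = lam + complex_of_real (u\<^sup>2)" unfolding w_def by simp
  have eq: "cosh w = complex_of_real (cos th1) * cosh (complex_of_real u + \<i> * complex_of_real ph1)"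
    using assms(3) cosh_sqrt_eq[of w] w2 by simp
  have c: "0 \<le> cos th1" "cos th1 \<le> 1" using assms(1,2) by (auto intro: cos_ge_zero)
  have X: "cosh (Re w) * cos (Im w) = cos th1 * cosh u * cos ph1"
    using arg_cong[OF eq, of Re] by (simp add: Re_cosh_c Im_cosh_c)
  have Y: "sinh (Re w) * sin (Im w) = cos th1 * sinh u * sin ph1"
    using arg_cong[OF eq, of Im] by (simp add: Re_cosh_c Im_cosh_c)
  have "(Re w)^2 \<le> u^2" by (rule key[OF c X Y])
  moreover have "Re lam = (Re w)^2 - (Im w)^2 - u^2"
    using arg_cong[OF w2, of Re] by (simp add: power2_eq_square)
  ultimately show ?thesis by (smt (verit) zero_le_power2)
qed

end
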